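(* For any $f:\mathbb{R}^N\to[-\infty,\infty]$, the function $\xi\mapsto \mu_{N}(\overline{B}_{F_{\xi }^{+}})$, where $F^+_\xi:=\{x\in\mathbb{R}^N:f(x)>\xi\}$, is nonincreasing and right-continuous on $[-\infty ,\infty ]$.
   Context: $\mu_N$ is $N$-dimensional Lebesgue measure. For nonempty bounded $X\subset\mathbb{R}^N$, $\overline{B}_X$ is the unique closed ball of minimal diameter containing $X$; $\overline{B}_X:=\mathbb{R}^N$ if $X$ is unbounded; $\overline{B}_\emptyset:=\{0\}$. *)

theory Defs
  imports "HOL-Analysis.Analysis"
begin

text \<open>A closed ball cball c r with r \<ge> 0 has diameter 2r, so minimal diameter
  is minimal radius.\<close>
definition min_encl_ball :: "'a::euclidean_space set \<Rightarrow> 'a set" where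
  "min_encl_ball X =
     (if X = {} then {0}
      else if bounded X then
        (THE B. \<exists>c r. B = cball c r \<and> X \<subseteq> cball c r \<and>
                   (\<forall>c' r'. X \<subseteq> cball c' r' \<longrightarrow> r \<le> r'))
      else UNIV)"

end

theory Submission
  imports Defs
begin
lemma finite_chain_min:
  assumes "finite F" "F \<noteq> {}" "\<forall>K1\<in>F. \<forall>K2\<in>F. K1 \<subseteq> K2 \<or> K2 \<subseteq> K1"
  shows "\<exists>M\<in>F. \<forall>K\<in>F. M \<subseteq> K"
  using assms
proof (induction F rule: finite_ne_induct)
  case (singleton x) then show ?case by simp
next
  case (insert x F)
  have "\<forall>K1\<in>F. \<forall>K2\<in>F. K1 \<subseteq> K2 \<or> K2 \<subseteq> K1" using insert.prems by simp
  then obtain M where M: "M \<in> F" "\<forall>K\<in>F. M \<subseteq> K" using insert.IH by blast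
  have "x \<subseteq> M \<or> M \<subseteq> x" using insert.prems M(1) by simp
  then show ?case
  proof
    assume "x \<subseteq> M" then have "\<forall>K\<in>insert x F. x \<subseteq> K" using M(2) by blast
    then show ?case by blast
  next
    assume "M \<subseteq> x" then have "\<forall>K\<in>insert x F. M \<subseteq> K" using M(2) by blast
    then show ?case using M(1) by blast
  qed
qed

lemma chain_inter:
  fixes \<K> :: "'a::t2_space set set"
  assumes "\<K> \<noteq> {}" "\<forall>K\<in>\<K>. compact K \<and> K \<noteq> {}"
    "\<forall>K1\<in>\<K>. \<forall>K2\<in>\<K>. K1 \<subseteq> K2 \<or> K2 \<subseteq> K1"
  shows "\<Inter>\<K> \<noteq> {}"
proof -
  obtain K0 where K0: "K0 \<in> \<K>" using assms(1) by auto
  have "K0 \<inter> \<Inter>\<K> \<noteq> {}"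
  proof (rule compact_imp_fip)
    show "compact K0" using K0 assms(2) by simp
    fix T assume "T \<in> \<K>"
    then have "compact T" using assms(2) by simp
    then show "closed T" by (rule compact_imp_closed)
  next
    fix F' assume F': "finite F'" "F' \<subseteq> \<K>"
    have sub: "insert K0 F' \<subseteq> \<K>" using F'(2) K0 by simp
    have ch: "\<forall>K1\<in>insert K0 F'. \<forall>K2\<in>insert K0 F'. K1 \<subseteq> K2 \<or> K2 \<subseteq> K1"
    proof (intro ballI)
      fix K1 K2 assume "K1 \<in> insert K0 F'" "K2 \<in> insert K0 F'"
      then have "K1 \<in> \<K>" "K2 \<in> \<K>" using sub by blast+
      then show "K1 \<subseteq> K2 \<or> K2 \<subseteq> K1" using assms(3) by simp
    qed
    obtain M where M: "M \<in> insert K0 F'" "\<forall>K\<in>insert K0 F'. M \<subseteq> K"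
      using finite_chain_min[OF _ _ ch] F'(1) by auto
    have "M \<in> \<K>" using M(1) sub by blast
    then have "M \<noteq> {}" using assms(2) by simp
    moreover have "M \<subseteq> K0 \<inter> \<Inter>F'" using M(2) by auto
    ultimately show "K0 \<inter> \<Inter>F' \<noteq> {}" by blast
  qed
  then show ?thesis by auto
qed

lemma compact_centers:
  fixes A :: "'a::euclidean_space set"
  assumes "A \<noteq> {}"
  shows "compact {c. A \<subseteq> cball c s}"
proof -
  have eq: "{c. A \<subseteq> cball c s} = (\<Inter>x\<in>A. cball x s)"
    by (auto simp: subset_iff dist_commute)
  obtain x0 where "x0 \<in> A" using assms by auto
  then have "{c. A \<subseteq> cball c s} \<subseteq> cball x0 s" by (auto simp: eq)
  then have "bounded {c. A \<subseteq> cball c s}" using bounded_cball bounded_subset by blast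
  moreover have "closed {c. A \<subseteq> cball c s}" unfolding eq by (intro closed_INT) auto
  ultimately show ?thesis using compact_eq_bounded_closed by blast
qed

lemma para: "(norm ((1/2::real) *\<^sub>R (u + v)))^2 = ((norm u)^2 + (norm v)^2)/2 - (norm (v - u))^2/4"
      for u v :: "'a::euclidean_space"
  unfolding power2_norm_eq_inner
  by (simp add: inner_add_left inner_add_right inner_diff_left inner_diff_right inner_commute field_simps)

definition rad :: "'a::euclidean_space set \<Rightarrow> real" where
  "rad X = Inf {r. \<exists>c. X \<subseteq> cball c r}"

lemma rad_props:
  fixes X :: "'a::euclidean_space set"
  assumes "bounded X" "X \<noteq> {}"
  shows "(\<exists>c. X \<subseteq> cball c (rad X)) \<and> (\<forall>c r. X \<subseteq> cball c r \<longrightarrow> rad X \<le> r)"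
proof -
  define R where "R = {r. \<exists>c. X \<subseteq> cball c r}"
  obtain e x1 where "X \<subseteq> cball x1 e" using assms(1) unfolding bounded_subset_cball by blast
  then have "e \<in> R" unfolding R_def by blast
  then have Rne: "R \<noteq> {}" by blast
  obtain x0 where x0: "x0 \<in> X" using assms(2) by blast
  have R0: "0 \<le> r" if rR: "r \<in> R" for r
  proof -
    obtain c where "X \<subseteq> cball c r" using rR unfolding R_def by blast
    then have "dist c x0 \<le> r" using x0 by (simp add: subset_iff)
    moreover have "0 \<le> dist c x0" by simp
    ultimately show ?thesis by linarith
  qed
  have bdd: "bdd_below R" unfolding bdd_below_def using R0 by blast
  have low: "\<forall>c r. X \<subseteq> cball c r \<longrightarrow> rad X \<le> r"
  proof (intro allI impI)
    fix c r assume "X \<subseteq> cball c r"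
    then have "r \<in> R" unfolding R_def by blast
    then show "rad X \<le> r" unfolding rad_def R_def[symmetric] using bdd by (rule cInf_lower)
  qed
  define KK where "KK = (\<lambda>r. {c. X \<subseteq> cball c r}) ` R"
  have mono: "{c. X \<subseteq> cball c r} \<subseteq> {c. X \<subseteq> cball c r'}" if "r \<le> r'" for r r'
  proof
    fix c assume "c \<in> {c. X \<subseteq> cball c r}"
    moreover have "cball c r \<subseteq> cball c r'" using that by (simp add: subset_iff)
    ultimately show "c \<in> {c. X \<subseteq> cball c r'}" by blast
  qed
  have "\<Inter>KK \<noteq> {}"
  proof (rule chain_inter)
    show "KK \<noteq> {}" using Rne unfolding KK_def by blast
    show "\<forall>K\<in>KK. compact K \<and> K \<noteq> {}"
    proof
      fix K assume "K \<in> KK"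
      then obtain r where r: "r \<in> R" "K = {c. X \<subseteq> cball c r}" unfolding KK_def by blast
      then show "compact K \<and> K \<noteq> {}" using compact_centers[OF assms(2)] unfolding R_def by blast
    qed
    show "\<forall>K1\<in>KK. \<forall>K2\<in>KK. K1 \<subseteq> K2 \<or> K2 \<subseteq> K1"
    proof (intro ballI)
      fix K1 K2 assume "K1 \<in> KK" "K2 \<in> KK"
      then obtain r1 r2 where "K1 = {c. X \<subseteq> cball c r1}" "K2 = {c. X \<subseteq> cball c r2}"
        unfolding KK_def by blast
      moreover have "r1 \<le> r2 \<or> r2 \<le> r1" by linarith
      ultimately show "K1 \<subseteq> K2 \<or> K2 \<subseteq> K1" using mono[of r1 r2] mono[of r2 r1] by blast
    qed
  qed
  then obtain c where c0: "c \<in> \<Inter>KK" by blast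
  have c: "X \<subseteq> cball c r" if "r \<in> R" for r
  proof -
    have "{c. X \<subseteq> cball c r} \<in> KK" using that unfolding KK_def by blast
    then show ?thesis using c0 by blast
  qed
  have "dist c x \<le> rad X" if "x \<in> X" for x
  proof (rule field_le_epsilon)
    fix e :: real assume "e > 0"
    then have "Inf R < rad X + e" by (simp add: rad_def R_def)
    then obtain r where r: "r \<in> R" "r < rad X + e" using cInf_less_iff[OF Rne bdd] by blast
    have "dist c x \<le> r" using c[OF r(1)] that by (simp add: subset_iff)
    then show "dist c x \<le> rad X + e" using r(2) by linarith
  qed
  then have "X \<subseteq> cball c (rad X)" by (simp add: subset_iff)
  then show ?thesis using low by blast
qed

lemma rad_unique:
  fixes X :: "'a::euclidean_space set"
  assumes "bounded X" "X \<noteq> {}" "X \<subseteq> cball c1 (rad X)" "X \<subseteq> cball c2 (rad X)"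
  shows "c1 = c2"
proof (rule ccontr)
  assume ne: "c1 \<noteq> c2"
  define r where "r = rad X"
  define d where "d = dist c1 c2"
  define m where "m = (1/2) *\<^sub>R (c1 + c2)"
  have dpos: "d > 0" using ne by (simp add: d_def)
  have key: "(dist x m)^2 = ((dist x c1)^2 + (dist x c2)^2)/2 - d^2/4" for x
  proof -
    have h: "(1/2::real) *\<^sub>R x + (1/2) *\<^sub>R x = x" by (simp add: scaleR_add_left[symmetric])
    have "x - m = (1/2) *\<^sub>R ((x - c1) + (x - c2))"
      by (simp add: m_def algebra_simps h)
    then have e1: "dist x m = norm ((1/2::real) *\<^sub>R ((x - c1) + (x - c2)))"
      by (simp only: dist_norm)
    have "(dist x m)^2 = ((norm (x - c1))^2 + (norm (x - c2))^2)/2 - (norm ((x - c2) - (x - c1)))^2/4"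
      unfolding e1 by (rule para)
    then show ?thesis by (simp add: d_def dist_norm norm_minus_commute)
  qed
  obtain x0 where x0: "x0 \<in> X" using assms(2) by auto
  have r0: "0 \<le> r" using assms(3) x0 r_def by (meson dual_order.trans mem_cball zero_le_dist subsetD)
  have b: "(dist x m)^2 \<le> r^2 - d^2/4" if "x \<in> X" for x
  proof -
    have "dist c1 x \<le> r" "dist c2 x \<le> r" using that assms(3,4) r_def by auto
    then have "(dist x c1)^2 \<le> r^2" "(dist x c2)^2 \<le> r^2"
      by (simp_all add: dist_commute power_mono)
    then show ?thesis using key[of x] by simp
  qed
  have nn: "0 \<le> r^2 - d^2/4" using b[OF x0] by (meson order_trans zero_le_power2)
  define r' where "r' = sqrt (r^2 - d^2/4)"
  have "X \<subseteq> cball m r'"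
  proof
    fix x assume "x \<in> X"
    then have "sqrt ((dist x m)^2) \<le> r'" unfolding r'_def using b real_sqrt_le_mono by blast
    then show "x \<in> cball m r'" by (simp add: dist_commute)
  qed
  then have "r \<le> r'" using rad_props[OF assms(1,2)] r_def by auto
  moreover have "r' < r"
  proof -
    have "r^2 - d^2/4 < r^2" using dpos by simp
    then have "r' < sqrt (r^2)" unfolding r'_def using real_sqrt_less_mono by blast
    then show ?thesis using r0 by simp
  qed
  ultimately show False by simp
qed

lemma meb_eq:
  fixes X :: "'a::euclidean_space set"
  assumes "bounded X" "X \<noteq> {}" "X \<subseteq> cball c (rad X)"
  shows "min_encl_ball X = cball c (rad X)"
proof -
  have "(THE B. \<exists>c r. B = cball c r \<and> X \<subseteq> cball c r \<and>
                   (\<forall>c' r'. X \<subseteq> cball c' r' \<longrightarrow> r \<le> r')) = cball c (rad X)"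
  proof (rule the_equality)
    show "\<exists>c' r. cball c (rad X) = cball c' r \<and> X \<subseteq> cball c' r \<and> (\<forall>c' r'. X \<subseteq> cball c' r' \<longrightarrow> r \<le> r')"
      using assms rad_props[OF assms(1,2)] by blast
    fix B assume "\<exists>c r. B = cball c r \<and> X \<subseteq> cball c r \<and> (\<forall>c' r'. X \<subseteq> cball c' r' \<longrightarrow> r \<le> r')"
    then obtain c' r where B: "B = cball c' r" "X \<subseteq> cball c' r" "\<forall>c'' r'. X \<subseteq> cball c'' r' \<longrightarrow> r \<le> r'"
      by blast
    have "r = rad X" using B(2,3) assms(3) rad_props[OF assms(1,2)] by (meson order_antisym)
    then have "c' = c" using rad_unique[OF assms(1,2)] B(2) assms(3) by blast
    then show "B = cball c (rad X)" using B(1) \<open>r = rad X\<close> by simp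
  qed
  then show ?thesis using assms by (simp add: min_encl_ball_def)
qed

lemma rad_nonneg:
  fixes X :: "'a::euclidean_space set"
  assumes "bounded X" "X \<noteq> {}"
  shows "0 \<le> rad X"
proof -
  obtain c where c: "X \<subseteq> cball c (rad X)" using rad_props[OF assms] by blast
  obtain x where "x \<in> X" using assms by auto
  then have "dist c x \<le> rad X" using c by (simp add: subset_iff)
  moreover have "0 \<le> dist c x" by simp
  ultimately show ?thesis by linarith
qed

lemma g_val:
  fixes X :: "'a::euclidean_space set"
  assumes "bounded X" "X \<noteq> {}"
  shows "emeasure lebesgue (min_encl_ball X) = ennreal (unit_ball_vol DIM('a) * rad X ^ DIM('a))"
proof -
  obtain c where "X \<subseteq> cball c (rad X)" using rad_props[OF assms] by blast
  then show ?thesis using meb_eq[OF assms] rad_nonneg[OF assms] by (simp add: emeasure_cball)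
qed

lemma g_empty: "emeasure lebesgue (min_encl_ball ({}::'a::euclidean_space set)) = 0"
proof -
  have "emeasure lebesgue (cball (0::'a) 0) = 0" by (simp add: emeasure_cball)
  then show ?thesis by (simp add: min_encl_ball_def)
qed

lemma g_unb:
  fixes X :: "'a::euclidean_space set"
  assumes "\<not> bounded X"
  shows "emeasure lebesgue (min_encl_ball X) = \<infinity>"
  using assms by (auto simp: min_encl_ball_def)

lemma g_mono:
  fixes X Y :: "'a::euclidean_space set"
  assumes "X \<subseteq> Y"
  shows "emeasure lebesgue (min_encl_ball X) \<le> emeasure lebesgue (min_encl_ball Y)"
proof (cases "X = {}")
  case True then show ?thesis by (simp add: g_empty)
next
  case False
  show ?thesis
  proof (cases "bounded Y")
    case False then show ?thesis by (simp add: g_unb)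
  next
    case True
    then have bX: "bounded X" using assms bounded_subset by blast
    have Yne: "Y \<noteq> {}" using False assms by auto
    obtain c where "Y \<subseteq> cball c (rad Y)" using rad_props[OF True Yne] by blast
    then have "rad X \<le> rad Y" using rad_props[OF bX \<open>X \<noteq> {}\<close>] assms by blast
    then have "rad X ^ DIM('a) \<le> rad Y ^ DIM('a)"
      using rad_nonneg[OF bX \<open>X \<noteq> {}\<close>] by (simp add: power_mono)
    then have "unit_ball_vol DIM('a) * rad X ^ DIM('a) \<le> unit_ball_vol DIM('a) * rad Y ^ DIM('a)"
      by (rule mult_left_mono) simp
    then show ?thesis unfolding g_val[OF bX \<open>X \<noteq> {}\<close>] g_val[OF True Yne]
      by (rule ennreal_leI)
  qed
qed


lemma chain_union_ball:
  fixes AA :: "'a::euclidean_space set set"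
  assumes "AA \<noteq> {}" "\<forall>A\<in>AA. A \<noteq> {} \<and> (\<exists>c. A \<subseteq> cball c s)"
    "\<forall>A1\<in>AA. \<forall>A2\<in>AA. A1 \<subseteq> A2 \<or> A2 \<subseteq> A1"
  shows "\<exists>c. \<Union>AA \<subseteq> cball c s"
proof -
  define KK where "KK = (\<lambda>A. {c. A \<subseteq> cball c s}) ` AA"
  have "\<Inter>KK \<noteq> {}"
  proof (rule chain_inter)
    show "KK \<noteq> {}" using assms(1) unfolding KK_def by blast
    show "\<forall>K\<in>KK. compact K \<and> K \<noteq> {}"
    proof
      fix K assume "K \<in> KK"
      then obtain A where A: "A \<in> AA" "K = {c. A \<subseteq> cball c s}" unfolding KK_def by blast
      have "A \<noteq> {}" "\<exists>c. A \<subseteq> cball c s" using assms(2) A(1) by blast+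
      then show "compact K \<and> K \<noteq> {}" using compact_centers[of A s] A(2) by blast
    qed
    show "\<forall>K1\<in>KK. \<forall>K2\<in>KK. K1 \<subseteq> K2 \<or> K2 \<subseteq> K1"
    proof (intro ballI)
      fix K1 K2 assume "K1 \<in> KK" "K2 \<in> KK"
      then obtain A1 A2 where A: "A1 \<in> AA" "A2 \<in> AA" "K1 = {c. A1 \<subseteq> cball c s}" "K2 = {c. A2 \<subseteq> cball c s}"
        unfolding KK_def by blast
      have "A1 \<subseteq> A2 \<or> A2 \<subseteq> A1" using assms(3) A(1,2) by blast
      then show "K1 \<subseteq> K2 \<or> K2 \<subseteq> K1"
      proof
        assume "A1 \<subseteq> A2" then have "K2 \<subseteq> K1" unfolding A(3,4) by blast
        then show ?thesis by blast
      next
        assume "A2 \<subseteq> A1" then have "K1 \<subseteq> K2" unfolding A(3,4) by blast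
        then show ?thesis by blast
      qed
    qed
  qed
  then obtain c where c0: "c \<in> \<Inter>KK" by blast
  have "A \<subseteq> cball c s" if "A \<in> AA" for A
  proof -
    have "{c. A \<subseteq> cball c s} \<in> KK" using that unfolding KK_def by blast
    then show ?thesis using c0 by blast
  qed
  then show ?thesis by blast
qed

lemma key_sup:
  fixes f :: "'a::euclidean_space \<Rightarrow> ereal" and l :: ennreal
  assumes H: "\<forall>\<xi>>\<xi>0. emeasure lebesgue (min_encl_ball {x. f x > \<xi>}) \<le> l"
  shows "emeasure lebesgue (min_encl_ball {x. f x > \<xi>0}) \<le> l"
proof (cases "{x. f x > \<xi>0} = {}")
  case True then show ?thesis by (simp add: g_empty)
next
  case ne: False
  show ?thesis
  proof (cases "l = \<infinity>")
    case True then show ?thesis by simp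
  next
    case lfin: False
    define V where "V = unit_ball_vol DIM('a)"
    define n where "n = DIM('a)"
    define t where "t = enn2real l / V"
    define s where "s = root n t"
    have Vpos: "V > 0" unfolding V_def by simp
    have npos: "n > 0" unfolding n_def by simp
    have lr: "l = ennreal (enn2real l)" using lfin by (simp add: ennreal_enn2real_if)
    have t0: "0 \<le> t" unfolding t_def using Vpos by simp
    define AA where "AA = {{x. f x > \<xi>} | \<xi>. \<xi>0 < \<xi> \<and> {x. f x > \<xi>} \<noteq> {}}"
    have bnd: "A \<noteq> {} \<and> (\<exists>c. A \<subseteq> cball c s)" if AinA: "A \<in> AA" for A
    proof -
      obtain \<xi> where xi: "\<xi>0 < \<xi>" "A = {x. f x > \<xi>}" "A \<noteq> {}" using AinA unfolding AA_def by blast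
      have le: "emeasure lebesgue (min_encl_ball A) \<le> l" using H xi by blast
      have bA: "bounded A"
      proof (rule ccontr)
        assume "\<not> bounded A"
        then have "emeasure lebesgue (min_encl_ball A) = \<infinity>" by (rule g_unb)
        then show False using le lfin by (simp add: top_unique)
      qed
      have "ennreal (V * rad A ^ n) \<le> ennreal (enn2real l)"
        using le g_val[OF bA xi(3)] lr unfolding V_def n_def by simp
      then have "V * rad A ^ n \<le> enn2real l" by (simp add: enn2real_nonneg)
      then have "rad A ^ n \<le> t" unfolding t_def using Vpos by (simp add: pos_le_divide_eq mult.commute)
      then have "root n (rad A ^ n) \<le> s" unfolding s_def using npos by (rule real_root_le_mono[rotated])
      then have rs: "rad A \<le> s" using real_root_power_cancel[OF npos rad_nonneg[OF bA xi(3)]] by simp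
      obtain c where c: "A \<subseteq> cball c (rad A)" using rad_props[OF bA xi(3)] by blast
      have "cball c (rad A) \<subseteq> cball c s" using rs by (simp add: subset_iff)
      then show ?thesis using c xi(3) by blast
    qed
    have un: "\<Union>AA = {x. f x > \<xi>0}"
    proof
      show "\<Union>AA \<subseteq> {x. f x > \<xi>0}"
      proof
        fix x assume "x \<in> \<Union>AA"
        then obtain \<xi> where "\<xi>0 < \<xi>" "x \<in> {x. f x > \<xi>}" unfolding AA_def by blast
        then show "x \<in> {x. f x > \<xi>0}" by simp
      qed
    next
      show "{x. f x > \<xi>0} \<subseteq> \<Union>AA"
      proof
        fix x assume "x \<in> {x. f x > \<xi>0}"
        then have "\<xi>0 < f x" by simp
        then obtain \<xi> where xi: "\<xi>0 < \<xi>" "\<xi> < f x" using dense by blast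
        then have "x \<in> {x. f x > \<xi>}" by simp
        moreover then have "{x. f x > \<xi>} \<in> AA" unfolding AA_def using xi(1) by blast
        ultimately show "x \<in> \<Union>AA" by blast
      qed
    qed
    have AAne: "AA \<noteq> {}" using un ne by blast
    have ch: "\<forall>A1\<in>AA. \<forall>A2\<in>AA. A1 \<subseteq> A2 \<or> A2 \<subseteq> A1"
    proof (intro ballI)
      fix A1 A2 assume "A1 \<in> AA" "A2 \<in> AA"
      then obtain \<xi>1 \<xi>2 where A: "A1 = {x. f x > \<xi>1}" "A2 = {x. f x > \<xi>2}" unfolding AA_def by blast
      have "\<xi>1 \<le> \<xi>2 \<or> \<xi>2 \<le> \<xi>1" by (rule linear)
      then show "A1 \<subseteq> A2 \<or> A2 \<subseteq> A1"
      proof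
        assume "\<xi>1 \<le> \<xi>2" then have "A2 \<subseteq> A1" unfolding A by (auto intro: le_less_trans)
        then show ?thesis by blast
      next
        assume "\<xi>2 \<le> \<xi>1" then have "A1 \<subseteq> A2" unfolding A by (auto intro: le_less_trans)
        then show ?thesis by blast
      qed
    qed
    obtain c where c: "{x. f x > \<xi>0} \<subseteq> cball c s"
      using chain_union_ball[OF AAne _ ch] bnd un by metis
    have bF: "bounded {x. f x > \<xi>0}" using c bounded_cball bounded_subset by blast
    have "rad {x. f x > \<xi>0} \<le> s" using rad_props[OF bF ne] c by blast
    then have "rad {x. f x > \<xi>0} ^ n \<le> s ^ n" using rad_nonneg[OF bF ne] by (simp add: power_mono)
    also have "s ^ n = t" unfolding s_def using npos t0 by simp
    finally have "V * rad {x. f x > \<xi>0} ^ n \<le> V * t" using Vpos by simp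
    also have "V * t = enn2real l" unfolding t_def using Vpos by simp
    finally have "ennreal (V * rad {x. f x > \<xi>0} ^ n) \<le> ennreal (enn2real l)" by (rule ennreal_leI)
    then show ?thesis using g_val[OF bF ne] lr unfolding V_def n_def by simp
  qed
qed

theorem lemma10:
  fixes f :: "'a::euclidean_space \<Rightarrow> ereal"
  defines "\<phi> \<equiv> (\<lambda>\<xi>::ereal. emeasure lebesgue (min_encl_ball {x. f x > \<xi>}))"
  shows "antimono \<phi> \<and> (\<forall>\<xi>. continuous (at_right \<xi>) \<phi>)"
proof
  show anti: "antimono \<phi>"
  proof (rule antimonoI)
    fix a b :: ereal assume "a \<le> b"
    then have "{x. f x > b} \<subseteq> {x. f x > a}" by (auto intro: le_less_trans)
    then show "\<phi> b \<le> \<phi> a" unfolding \<phi>_def by (rule g_mono)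
  qed
  show "\<forall>\<xi>. continuous (at_right \<xi>) \<phi>"
  proof
    fix \<xi>0 :: ereal
    show "continuous (at_right \<xi>0) \<phi>"
    proof (cases "\<xi>0 = \<infinity>")
      case True
      have "at_right \<xi>0 = bot" unfolding True top_ereal_def[symmetric] by (rule trivial_limit_at_right_top)
      then show ?thesis unfolding continuous_def by simp
    next
      case False
      then have lt: "\<xi>0 < \<infinity>" by (simp add: less_top)
      show ?thesis unfolding continuous_within order_tendsto_iff
      proof (intro conjI allI impI)
        fix u assume u: "\<phi> \<xi>0 < u"
        have "\<forall>y>\<xi>0. y < \<infinity> \<longrightarrow> \<phi> y < u"
        proof (intro allI impI)
          fix y assume "\<xi>0 < y" then have "\<phi> y \<le> \<phi> \<xi>0" using anti by (simp add: antimonoD)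
          then show "\<phi> y < u" using u by simp
        qed
        then show "eventually (\<lambda>y. \<phi> y < u) (at_right \<xi>0)"
          unfolding eventually_at_right[OF lt] using lt by blast
      next
        fix l assume l: "l < \<phi> \<xi>0"
        have "\<exists>\<xi>1>\<xi>0. l < \<phi> \<xi>1"
        proof (rule ccontr)
          assume nex: "\<not> (\<exists>\<xi>1>\<xi>0. l < \<phi> \<xi>1)"
          have "\<forall>\<xi>>\<xi>0. \<phi> \<xi> \<le> l"
          proof (intro allI impI)
            fix \<xi> assume "\<xi>0 < \<xi>"
            then have "\<not> l < \<phi> \<xi>" using nex by blast
            then show "\<phi> \<xi> \<le> l" by (simp add: not_less)
          qed
          then have "\<forall>\<xi>>\<xi>0. emeasure lebesgue (min_encl_ball {x. f x > \<xi>}) \<le> l"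
            unfolding \<phi>_def by simp
          then have "\<phi> \<xi>0 \<le> l" unfolding \<phi>_def by (rule key_sup)
          then show False using l by simp
        qed
        then obtain \<xi>1 where xi1: "\<xi>0 < \<xi>1" "l < \<phi> \<xi>1" by blast
        have "\<forall>y>\<xi>0. y < \<xi>1 \<longrightarrow> l < \<phi> y"
        proof (intro allI impI)
          fix y assume "y < \<xi>1" then have "\<phi> \<xi>1 \<le> \<phi> y" using anti by (simp add: antimonoD)
          then show "l < \<phi> y" using xi1(2) by simp
        qed
        then show "eventually (\<lambda>y. l < \<phi> y) (at_right \<xi>0)"
          unfolding eventually_at_right[OF lt] using xi1(1) by blast
      qed
    qed
  qed
qed

end
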